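(* Let $f\in\mathbb{R}[x,y]$ and $p=(x_0,y_0)$ with $f(p)=0$ and $\frac{\partial f}{\partial y}(p)\neq0$, and let $g:I\to J$ be the differentiable function on open intervals $I\ni x_0$, $J\ni y_0$ with $g(x_0)=y_0$ and $\{(x,y)\in I\times J: f(x,y)=0\}=\{(x,g(x)):x\in I\}$. Let $[a,b]\subseteq I$ be a closed bounded interval and suppose $g$ is not a linear function. Then $g$ has only finitely many inflection points and local minimum points in $[a,b]$. *)

theory Defs
  imports "HOL-Analysis.Analysis"
begin

definition bipoly_eval :: "(nat \<Rightarrow> nat \<Rightarrow> real) \<Rightarrow> nat \<Rightarrow> real \<Rightarrow> real \<Rightarrow> real" where
  "bipoly_eval c n x y = (\<Sum>i\<le>n. \<Sum>j\<le>n. c i j * x ^ i * y ^ j)"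

definition inflection_point :: "(real \<Rightarrow> real) \<Rightarrow> real set \<Rightarrow> real \<Rightarrow> bool" where
  "inflection_point g I x0 \<longleftrightarrow> (\<exists>d>0. {x0 - d..x0 + d} \<subseteq> I \<and>
     ((convex_on {x0 - d..x0} g \<and> concave_on {x0..x0 + d} g) \<or>
      (concave_on {x0 - d..x0} g \<and> convex_on {x0..x0 + d} g)))"

definition local_min_point :: "(real \<Rightarrow> real) \<Rightarrow> real set \<Rightarrow> real \<Rightarrow> bool" where
  "local_min_point g I x0 \<longleftrightarrow> x0 \<in> I \<and> (\<exists>d>0. \<forall>x\<in>I. \<bar>x - x0\<bar> < d \<longrightarrow> g x0 \<le> g x)"

end

theory Submission
  imports Defs "HOL-Computational_Algebra.Polynomial_Factorial" "HOL-Computational_Algebra.Field_as_Ring"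
begin

lemma field_poly_bezout:
  fixes q p :: "'k::field poly"
  assumes "\<forall>d. d dvd p \<longrightarrow> d dvd q \<longrightarrow> is_unit d"
  shows "\<exists>a b. a * p + b * q = 1"
  using assms
proof (induction q arbitrary: p rule: measure_induct_rule[where f=degree])
  case (less q p)
  show ?case
  proof (cases "q = 0")
    case True
    then have "is_unit p" using less.prems[rule_format, OF dvd_refl] by simp
    then obtain r where "1 = p * r" by (rule dvdE)
    then show ?thesis by (intro exI[of _ r] exI[of _ 0]) (simp add: mult.commute)
  next
    case qnz: False
    define r where "r = p mod q"
    have pr: "p = (p div q) * q + r" by (simp add: r_def)
    show ?thesis
    proof (cases "r = 0")
      case True
      have "q dvd p" unfolding dvd_def using pr True by (intro exI[of _ "p div q"]) (simp add: mult.commute)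
      then have "is_unit q" using less.prems[rule_format, OF \<open>q dvd p\<close> dvd_refl] by simp
      then obtain s where "1 = q * s" by (rule dvdE)
      then show ?thesis by (intro exI[of _ 0] exI[of _ s]) (simp add: mult.commute)
    next
      case False
      then have "degree r < degree q" using degree_mod_less[OF qnz, of p] r_def by auto
      moreover have "\<forall>d. d dvd q \<longrightarrow> d dvd r \<longrightarrow> is_unit d"
      proof (intro allI impI)
        fix d assume "d dvd q" "d dvd r"
        then have "d dvd (p div q) * q + r" by (intro dvd_add dvd_mult) auto
        then have "d dvd p" using pr by simp
        then show "is_unit d" using less.prems[rule_format, OF _ \<open>d dvd q\<close>] by blast
      qed
      ultimately obtain a b where ab: "a * q + b * r = 1" using less.IH[of r q] by blast
      have rr: "r = p - p div q * q" unfolding r_def by (simp add: minus_div_mult_eq_mod)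
      have "b * p + (a - b * (p div q)) * q = 1"
        using ab unfolding rr by (simp add: algebra_simps)
      then show ?thesis by blast
    qed
  qed
qed

lemma clear_denom:
  fixes a :: "real poly fract poly"
  shows "\<exists>c A. c \<noteq> 0 \<and> smult (to_fract c) a = fract_poly A"
proof -
  obtain u v where uv: "fract_content a = Fract u v" "v \<noteq> 0" by (cases "fract_content a") auto
  have "smult (to_fract v) a = smult (to_fract v) (smult (fract_content a) (fract_poly (primitive_part_fract a)))"
    by (simp add: content_times_primitive_part_fract)
  also have "\<dots> = smult (to_fract u) (fract_poly (primitive_part_fract a))"
    using uv by (simp add: Fract_conv_to_fract)
  also have "\<dots> = fract_poly (smult u (primitive_part_fract a))" by simp
  finally show ?thesis using uv(2) by blast
qed

lemma bezout_bivar: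
  fixes P Q :: "real poly poly"
  assumes irr: "irreducible P" and deg: "degree P \<noteq> 0" and ndvd: "\<not> P dvd Q"
  shows "\<exists>A B D. A * P + B * Q = [:D:] \<and> D \<noteq> 0"
proof -
  from irr deg have irr': "irreducible (fract_poly P)" and cont: "content P = 1"
    by (simp_all add: nonconst_poly_irreducible_iff)
  have "\<forall>d. d dvd fract_poly P \<longrightarrow> d dvd fract_poly Q \<longrightarrow> is_unit d"
  proof (intro allI impI)
    fix d assume d1: "d dvd fract_poly P" and d2: "d dvd fract_poly Q"
    from d1 obtain e where e: "fract_poly P = d * e" by (auto elim: dvdE)
    from irreducibleD[OF irr' e] have "is_unit d \<or> is_unit e" .
    moreover have "\<not> is_unit e"
    proof
      assume "is_unit e"
      then have "fract_poly P dvd d" using e by (metis dvd_mult_unit_iff dvd_refl mult.commute)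
      then have "fract_poly P dvd fract_poly Q" using d2 by (rule dvd_trans)
      then have "P dvd Q" using cont by (rule fract_poly_dvdD)
      with ndvd show False by simp
    qed
    ultimately show "is_unit d" by blast
  qed
  from field_poly_bezout[OF this] obtain a b where ab: "a * fract_poly P + b * fract_poly Q = 1" by blast
  obtain ca A where A: "ca \<noteq> 0" "smult (to_fract ca) a = fract_poly A" using clear_denom by blast
  obtain cb B where B: "cb \<noteq> 0" "smult (to_fract cb) b = fract_poly B" using clear_denom by blast
  have "fract_poly (smult cb A * P + smult ca B * Q) = smult (to_fract ca * to_fract cb) (a * fract_poly P + b * fract_poly Q)"
  proof -
    have "fract_poly (smult cb A * P + smult ca B * Q) = smult (to_fract cb) (fract_poly A) * fract_poly P + smult (to_fract ca) (fract_poly B) * fract_poly Q"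
      by simp
    also have "\<dots> = smult (to_fract cb) (smult (to_fract ca) a) * fract_poly P + smult (to_fract ca) (smult (to_fract cb) b) * fract_poly Q"
      by (simp only: A(2)[symmetric] B(2)[symmetric])
    also have "\<dots> = smult (to_fract ca * to_fract cb) (a * fract_poly P + b * fract_poly Q)"
      by (simp add: smult_add_right mult.commute)
    finally show ?thesis .
  qed
  also have "\<dots> = smult (to_fract ca * to_fract cb) 1" by (simp only: ab)
  also have "\<dots> = fract_poly [:ca * cb:]" by (simp add: smult_one map_poly_pCons)
  finally have "smult cb A * P + smult ca B * Q = [:ca * cb:]" by (simp only: fract_poly_eq_iff)
  moreover have "ca * cb \<noteq> 0" using A(1) B(1) by simp
  ultimately show ?thesis by (intro exI[of _ "smult cb A"] exI[of _ "smult ca B"] exI[of _ "ca*cb"] conjI)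
qed


definition ev :: "real poly poly \<Rightarrow> real \<Rightarrow> real \<Rightarrow> real" where
  "ev P x y = poly (poly P [:y:]) x"

lemma ev_add[simp]: "ev (P + Q) x y = ev P x y + ev Q x y" by (simp add: ev_def)
lemma ev_diff[simp]: "ev (P - Q) x y = ev P x y - ev Q x y" by (simp add: ev_def)
lemma ev_minus[simp]: "ev (- P) x y = - ev P x y" by (simp add: ev_def)
lemma ev_mult[simp]: "ev (P * Q) x y = ev P x y * ev Q x y" by (simp add: ev_def)
lemma ev_const[simp]: "ev [:D:] x y = poly D x" by (simp add: ev_def)
lemma ev_0[simp]: "ev 0 x y = 0" by (simp add: ev_def)
lemma ev_pCons: "ev (pCons a P) x y = poly a x + y * ev P x y" by (simp add: ev_def)

lemma ev_poly_comp: "poly (poly P q) t = ev P t (poly q t)"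
  by (induction P) (auto simp: ev_pCons)

lemma ev_deriv:
  assumes h: "(h has_real_derivative h') (at t)"
  shows "((\<lambda>s. ev P s (h s)) has_real_derivative
           (ev (map_poly pderiv P) t (h t) + ev (pderiv P) t (h t) * h')) (at t)"
proof (induction P)
  case 0
  then show ?case by simp
next
  case (pCons a P)
  have d: "((\<lambda>s. poly a s + h s * ev P s (h s)) has_real_derivative
      (poly (pderiv a) t + (h' * ev P t (h t) + (ev (map_poly pderiv P) t (h t) + ev (pderiv P) t (h t) * h') * h t))) (at t)"
    by (intro DERIV_add poly_DERIV DERIV_mult h pCons.IH)
  have "ev (map_poly pderiv (pCons a P)) t (h t) + ev (pderiv (pCons a P)) t (h t) * h'
     = poly (pderiv a) t + (h' * ev P t (h t) + (ev (map_poly pderiv P) t (h t) + ev (pderiv P) t (h t) * h') * h t)"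
    using pCons.hyps by (simp add: map_poly_pCons pderiv_pCons ev_pCons algebra_simps)
  then show ?case unfolding ev_pCons using d by simp
qed

definition bipoly :: "(nat \<Rightarrow> nat \<Rightarrow> real) \<Rightarrow> nat \<Rightarrow> real poly poly" where
  "bipoly c n = (\<Sum>i\<le>n. \<Sum>j\<le>n. monom (monom (c i j) i) j)"

lemma ev_sum: "ev (sum f A) x y = (\<Sum>a\<in>A. ev (f a) x y)"
  by (induction A rule: infinite_finite_induct) auto

lemma bipoly_eval_ev: "bipoly_eval c n x y = ev (bipoly c n) x y"
  by (simp add: bipoly_eval_def bipoly_def ev_sum) (simp add: ev_def poly_monom mult.assoc)


lemma isCont_eventually_ne:
  fixes f :: "real \<Rightarrow> real"
  assumes "isCont f x" "f x \<noteq> 0"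
  shows "eventually (\<lambda>t. f t \<noteq> 0) (nhds x)"
proof -
  have "eventually (\<lambda>t. f t \<noteq> 0) (at x)"
    using tendsto_imp_eventually_ne[OF isContD[OF assms(1)] assms(2)] .
  then show ?thesis using assms(2) by (simp add: eventually_nhds_conv_at)
qed

lemma concave_on_subset: "concave_on T f \<Longrightarrow> S \<subseteq> T \<Longrightarrow> convex S \<Longrightarrow> concave_on S f"
  unfolding concave_on_def by (rule convex_on_subset)

definition Px :: "real poly poly \<Rightarrow> real poly poly" where "Px P = map_poly pderiv P"
definition Py :: "real poly poly \<Rightarrow> real poly poly" where "Py P = pderiv P"
definition NN :: "real poly poly \<Rightarrow> real poly poly" where
  "NN P = Px (Px P) * Py P * Py P - Py (Px P) * Px P * Py P - Px P * Px (Py P) * Py P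
          + Px P * Py (Py P) * Px P"

lemma ev_1[simp]: "ev 1 x y = 1" by (simp add: ev_def)

lemma ev_unit: "is_unit u \<Longrightarrow> ev u x y \<noteq> 0"
proof -
  assume "is_unit u"
  then obtain v where "1 = u * v" by (rule dvdE)
  then have "ev u x y * ev v x y = 1" by (metis ev_1 ev_mult)
  then show ?thesis by auto
qed

lemma ev_prod_mset_zero: "ev (prod_mset M) x y = 0 \<Longrightarrow> \<exists>P\<in>#M. ev P x y = 0"
  by (induction M) auto

locale setting =
  fixes F :: "real poly poly" and I J :: "real set" and g :: "real \<Rightarrow> real"
  assumes Fnz: "F \<noteq> 0"
    and I: "open I" "is_interval I" and J: "open J"
    and gmap: "\<forall>x\<in>I. g x \<in> J"
    and gdiff: "g differentiable_on I"
    and zero_graph: "\<And>x. x \<in> I \<Longrightarrow> ev F x (g x) = 0"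
    and graph_uniq: "\<And>x y. x \<in> I \<Longrightarrow> y \<in> J \<Longrightarrow> ev F x y = 0 \<Longrightarrow> y = g x"
    and nonlin: "\<not> (\<exists>m k. \<forall>x\<in>I. g x = m * x + k)"
begin

lemma gder: "x \<in> I \<Longrightarrow> (g has_real_derivative deriv g x) (at x)"
  using gdiff I(1) by (simp add: differentiable_on_eq_differentiable_at DERIV_deriv_iff_real_differentiable)

lemma gcont: "continuous_on I g"
  using gdiff differentiable_imp_continuous_on by blast

lemma evder: "x \<in> I \<Longrightarrow> ((\<lambda>t. ev Q t (g t)) has_real_derivative
      (ev (Px Q) x (g x) + ev (Py Q) x (g x) * deriv g x)) (at x)"
  unfolding Px_def Py_def by (rule ev_deriv[OF gder])

lemma evcont: "x \<in> I \<Longrightarrow> isCont (\<lambda>t. ev Q t (g t)) x"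
  using evder DERIV_isCont by blast

lemma no_affine:
  assumes e: "e > 0" "ball x e \<subseteq> I" and aff: "\<forall>t\<in>ball x e. g t = m * t + k"
  shows False
proof -
  define R where "R = poly F [:k, m:]"
  have R: "poly R t = ev F t (k + t * m)" for t
    unfolding R_def by (simp add: ev_poly_comp)
  have "ball x e \<subseteq> {t. poly R t = 0}"
  proof
    fix t assume t: "t \<in> ball x e"
    then have "g t = k + t * m" using aff by (simp add: algebra_simps)
    then show "t \<in> {t. poly R t = 0}" using zero_graph[of t] t e(2) R by auto
  qed
  moreover have "infinite (ball x e)"
    using uncountable_ball[OF e(1)] countable_finite by blast
  ultimately have "R = 0" using poly_roots_finite finite_subset by blast
  then have Rz: "ev F t (k + t * m) = 0" for t using R by simp
  define S where "S = {t \<in> I. k + t * m \<in> J}"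
  have S_eq: "S = {t \<in> I. g t - (k + t * m) = 0}"
    unfolding S_def using graph_uniq Rz gmap by force
  have conn: "connected I" using I(2) is_interval_connected by blast
  have "openin (top_of_set I) S"
  proof -
    have "open ((\<lambda>t. k + t * m) -` J)"
      by (intro open_vimage J continuous_intros)
    then have "openin (top_of_set I) (I \<inter> (\<lambda>t. k + t * m) -` J)"
      by (rule openin_open_Int)
    moreover have "I \<inter> (\<lambda>t. k + t * m) -` J = S" unfolding S_def by auto
    ultimately show ?thesis by simp
  qed
  moreover have "closedin (top_of_set I) S"
    unfolding S_eq by (intro continuous_closedin_preimage_constant continuous_intros gcont)
  moreover have "x \<in> S"
    using e aff S_eq by (auto simp: algebra_simps)
  ultimately have "S = I" using conn unfolding connected_clopen by blast
  then have "\<forall>t\<in>I. g t = m * t + k" unfolding S_eq by (auto simp: algebra_simps)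
  then show False using nonlin by blast
qed

lemma no_affine_interval:
  assumes uv: "u < v" "{u..v} \<subseteq> I" and cv: "convex_on {u..v} g" and cc: "concave_on {u..v} g"
  shows False
proof -
  define m where "m = (g v - g u) / (v - u)"
  have eq: "g t = m * t + (g u - m * u)" if t: "t \<in> ball ((u+v)/2) ((v-u)/2)" for t
  proof -
    have tuv: "u < t" "t < v" using t by (auto simp: dist_real_def abs_less_iff field_simps)
    define th where "th = (t - u) / (v - u)"
    have th: "0 \<le> th" "th \<le> 1" using tuv uv unfolding th_def by (auto simp: field_simps)
    have thv: "th * (v - u) = t - u" using uv unfolding th_def by simp
    have "(1 - th) * u + th * v = u + th * (v - u)" by (simp add: algebra_simps)
    then have tt: "t = (1 - th) *\<^sub>R u + th *\<^sub>R v" using thv by simp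
    have u: "u \<in> {u..v}" and v: "v \<in> {u..v}" using uv by auto
    have "g t \<le> (1 - th) * g u + th * g v" using convex_onD[OF cv th u v] tt by simp
    moreover have "g t \<ge> (1 - th) * g u + th * g v" using concave_onD[OF cc th u v] tt by simp
    ultimately have "g t = (1 - th) * g u + th * g v" by linarith
    then show ?thesis using uv unfolding th_def m_def by (simp add: field_simps)
  qed
  have "ball ((u+v)/2) ((v-u)/2) \<subseteq> I"
  proof
    fix t assume "t \<in> ball ((u+v)/2) ((v-u)/2)"
    then have "u < t" "t < v" by (auto simp: dist_real_def abs_less_iff field_simps)
    then show "t \<in> I" using uv(2) by auto
  qed
  from no_affine[OF _ this] eq uv(1) show False by force
qed

lemma no_inflection_strict:
  assumes e: "e > 0" "ball x e \<subseteq> I"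
    and d2: "\<forall>t\<in>ball x e. (deriv g has_real_derivative G2 t) (at t)"
    and c2: "isCont G2 x" and nz: "G2 x \<noteq> 0"
  shows "\<not> inflection_point g I x"
proof
  assume infl: "inflection_point g I x"
  have "eventually (\<lambda>t. G2 t * G2 x > 0) (nhds x)"
  proof -
    have "isCont (\<lambda>t. G2 t * G2 x) x" using c2 by (intro continuous_intros)
    moreover have "G2 x * G2 x > 0" using nz by (auto simp: zero_less_mult_iff linorder_neq_iff)
    ultimately have "eventually (\<lambda>t. G2 t * G2 x > 0) (at x)"
      using order_tendstoD(1)[OF isContD] by blast
    then show ?thesis using \<open>G2 x * G2 x > 0\<close> by (simp add: eventually_nhds_conv_at)
  qed
  then obtain e1 where e1: "e1 > 0" "\<forall>t. dist t x < e1 \<longrightarrow> G2 t * G2 x > 0"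
    unfolding eventually_nhds_metric by blast
  define r where "r = min e e1 / 2"
  have r: "r > 0" "r < e" "r < e1" using e e1 by (auto simp: r_def)
  have sub: "{x - r..x + r} \<subseteq> ball x e" using r by (auto simp: dist_real_def)
  have sign: "G2 t * G2 x > 0" if "t \<in> {x - r..x + r}" for t
    using e1(2) that r by (auto simp: dist_real_def)
  have gd: "(g has_real_derivative deriv g t) (at t)" if "t \<in> {x - r..x + r}" for t
    using gder sub e(2) that by blast
  have d2': "(deriv g has_real_derivative G2 t) (at t)" if "t \<in> {x - r..x + r}" for t
    using d2 sub that by blast
  have conv_or_conc: "convex_on {x - r..x + r} g \<or> concave_on {x - r..x + r} g"
  proof (cases "G2 x > 0")
    case True
    have "convex_on {x - r..x + r} g"
    proof (rule convex_on_realI[where f'="deriv g"])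
      show "connected {x - r..x + r}" by simp
      show "\<And>t. t \<in> {x - r..x + r} \<Longrightarrow> (g has_real_derivative deriv g t) (at t)" by (rule gd)
      fix s t assume st: "s \<in> {x - r..x + r}" "t \<in> {x - r..x + r}" "s \<le> t"
      show "deriv g s \<le> deriv g t"
      proof (cases "s = t")
        case False
        then have "s < t" using st by simp
        have "deriv g s < deriv g t"
        proof (rule DERIV_pos_imp_increasing[OF \<open>s < t\<close>])
          fix y assume "s \<le> y" "y \<le> t"
          then have y: "y \<in> {x - r..x + r}" using st by auto
          then show "\<exists>z. (deriv g has_real_derivative z) (at y) \<and> 0 < z"
            using d2' sign[OF y] True by (auto simp: zero_less_mult_iff)
        qed
        then show ?thesis by simp
      qed simp
    qed
    then show ?thesis by simp
  next
    case False
    then have neg: "G2 x < 0" using nz by simp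
    have "convex_on {x - r..x + r} (\<lambda>t. - g t)"
    proof (rule convex_on_realI[where f'="\<lambda>t. - deriv g t"])
      show "connected {x - r..x + r}" by simp
      show "\<And>t. t \<in> {x - r..x + r} \<Longrightarrow> ((\<lambda>t. - g t) has_real_derivative - deriv g t) (at t)"
        by (intro DERIV_minus gd)
      fix s t assume st: "s \<in> {x - r..x + r}" "t \<in> {x - r..x + r}" "s \<le> t"
      show "- deriv g s \<le> - deriv g t"
      proof (cases "s = t")
        case False
        then have "s < t" using st by simp
        have "- deriv g s < - deriv g t"
        proof (rule DERIV_pos_imp_increasing[OF \<open>s < t\<close>])
          fix y assume "s \<le> y" "y \<le> t"
          then have y: "y \<in> {x - r..x + r}" using st by auto
          have "G2 y < 0" using sign[OF y] neg by (auto simp: zero_less_mult_iff)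
          then show "\<exists>z. ((\<lambda>t. - deriv g t) has_real_derivative z) (at y) \<and> 0 < z"
            using DERIV_minus[OF d2'[OF y]] by auto
        qed
        then show ?thesis by simp
      qed simp
    qed
    then show ?thesis by (simp add: concave_on_def)
  qed
  from infl obtain d where d: "d > 0" "{x - d..x + d} \<subseteq> I"
    and cases: "(convex_on {x - d..x} g \<and> concave_on {x..x + d} g) \<or>
      (concave_on {x - d..x} g \<and> convex_on {x..x + d} g)"
    unfolding inflection_point_def by blast
  define s where "s = min d r"
  have s: "s > 0" "s \<le> d" "s \<le> r" using d r by (auto simp: s_def)
  have L1: "{x - s..x} \<subseteq> {x - d..x}" "{x - s..x} \<subseteq> {x - r..x + r}" "{x - s..x} \<subseteq> I"
    and R1: "{x..x + s} \<subseteq> {x..x + d}" "{x..x + s} \<subseteq> {x - r..x + r}" "{x..x + s} \<subseteq> I"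
    using s d by auto
  have lt: "x - s < x" "x < x + s" using s by auto
  have cL: "convex {x - s..x}" and cR: "convex {x..x + s}" by (simp_all add: convex_real_interval)
  from cases conv_or_conc show False
  proof (elim disjE conjE)
    assume a: "convex_on {x - d..x} g" "concave_on {x..x + d} g" "convex_on {x - r..x + r} g"
    show False by (rule no_affine_interval[OF lt(2) R1(3) convex_on_subset[OF a(3) R1(2) cR] concave_on_subset[OF a(2) R1(1) cR]])
  next
    assume a: "convex_on {x - d..x} g" "concave_on {x..x + d} g" "concave_on {x - r..x + r} g"
    show False by (rule no_affine_interval[OF lt(1) L1(3) convex_on_subset[OF a(1) L1(1) cL] concave_on_subset[OF a(3) L1(2) cL]])
  next
    assume a: "concave_on {x - d..x} g" "convex_on {x..x + d} g" "convex_on {x - r..x + r} g"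
    show False by (rule no_affine_interval[OF lt(1) L1(3) convex_on_subset[OF a(3) L1(2) cL] concave_on_subset[OF a(1) L1(1) cL]])
  next
    assume a: "concave_on {x - d..x} g" "convex_on {x..x + d} g" "concave_on {x - r..x + r} g"
    show False by (rule no_affine_interval[OF lt(2) R1(3) convex_on_subset[OF a(2) R1(1) cR] concave_on_subset[OF a(3) R1(2) cR]])
  qed
qed

lemma ball_formula:
  assumes B: "open B" "B \<subseteq> I" and van: "\<forall>t\<in>B. ev P t (g t) = 0 \<and> ev (Py P) t (g t) \<noteq> 0"
    and t: "t \<in> B"
  shows "deriv g t = - ev (Px P) t (g t) / ev (Py P) t (g t)"
proof -
  have tI: "t \<in> I" using B t by blast
  have d1: "((\<lambda>s. ev P s (g s)) has_real_derivative (ev (Px P) t (g t) + ev (Py P) t (g t) * deriv g t)) (at t)"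
    by (rule evder[OF tI])
  have d0: "((\<lambda>s. ev P s (g s)) has_real_derivative 0) (at t)"
    by (rule has_field_derivative_transform_within_open[OF DERIV_const[of 0] B(1) t]) (use van in auto)
  have "ev (Px P) t (g t) + ev (Py P) t (g t) * deriv g t = 0" using DERIV_unique[OF d1 d0] .
  moreover have "ev (Py P) t (g t) \<noteq> 0" using van t by blast
  ultimately show ?thesis by (simp add: field_simps add_eq_0_iff)
qed

lemma ball_deriv2:
  assumes B: "open B" "B \<subseteq> I" and van: "\<forall>t\<in>B. ev P t (g t) = 0 \<and> ev (Py P) t (g t) \<noteq> 0"
    and t: "t \<in> B"
  shows "(deriv g has_real_derivative - ev (NN P) t (g t) / ev (Py P) t (g t) ^ 3) (at t)"
proof -
  have tI: "t \<in> I" using B t by blast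
  define E1 where "E1 = (\<lambda>s. ev (Px P) s (g s))"
  define E2 where "E2 = (\<lambda>s. ev (Py P) s (g s))"
  define D1 where "D1 = ev (Px (Px P)) t (g t) + ev (Py (Px P)) t (g t) * deriv g t"
  define D2 where "D2 = ev (Px (Py P)) t (g t) + ev (Py (Py P)) t (g t) * deriv g t"
  have d1: "(E1 has_real_derivative D1) (at t)" unfolding E1_def D1_def by (rule evder[OF tI])
  have d2: "(E2 has_real_derivative D2) (at t)" unfolding E2_def D2_def by (rule evder[OF tI])
  have nz: "E2 t \<noteq> 0" using van t unfolding E2_def by blast
  have dq: "((\<lambda>s. - (E1 s / E2 s)) has_real_derivative - ((D1 * E2 t - E1 t * D2) / (E2 t * E2 t))) (at t)"
    by (intro DERIV_minus DERIV_divide d1 d2 nz)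
  have dg: "(deriv g has_real_derivative - ((D1 * E2 t - E1 t * D2) / (E2 t * E2 t))) (at t)"
  proof (rule has_field_derivative_transform_within_open[OF dq B(1) t])
    fix s assume "s \<in> B"
    then show "- (E1 s / E2 s) = deriv g s" using ball_formula[OF B van] unfolding E1_def E2_def by simp
  qed
  have gt: "deriv g t = - E1 t / E2 t" using ball_formula[OF B van t] unfolding E1_def E2_def .
  have "- ((D1 * E2 t - E1 t * D2) / (E2 t * E2 t)) = - ev (NN P) t (g t) / ev (Py P) t (g t) ^ 3"
    unfolding D1_def D2_def gt NN_def using nz unfolding E1_def E2_def
    by (simp add: field_simps power3_eq_cube)
  with dg show ?thesis by simp
qed

lemma finite_Z:
  assumes "prime P" "degree P \<noteq> 0" "\<not> P dvd Q"
  shows "finite {x. ev P x (g x) = 0 \<and> ev Q x (g x) = 0}"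
proof -
  have "irreducible P" using assms(1) by (simp add: prime_elem_imp_irreducible prime_imp_prime_elem)
  from bezout_bivar[OF this assms(2,3)] obtain A B D where ABD: "A * P + B * Q = [:D:]" "D \<noteq> 0" by blast
  have "{x. ev P x (g x) = 0 \<and> ev Q x (g x) = 0} \<subseteq> {x. poly D x = 0}"
  proof safe
    fix x assume "ev P x (g x) = 0" "ev Q x (g x) = 0"
    then have "ev (A * P + B * Q) x (g x) = 0" by simp
    then show "poly D x = 0" using ABD(1) by simp
  qed
  then show ?thesis using poly_roots_finite[OF ABD(2)] finite_subset by blast
qed

lemma finite_Z0:
  assumes "P \<noteq> 0" "degree P = 0"
  shows "finite {x. ev P x (g x) = 0}"
proof -
  from assms(2) obtain a where a: "P = [:a:]" by (rule degree_eq_zeroE)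
  then have "a \<noteq> 0" using assms(1) by simp
  moreover have "{x. ev P x (g x) = 0} = {x. poly a x = 0}" using a by simp
  ultimately show ?thesis using poly_roots_finite by simp
qed

lemma main_finite:
  "\<exists>Bad. finite Bad \<and> (\<forall>x\<in>I. x \<notin> Bad \<longrightarrow> \<not> inflection_point g I x \<and> \<not> local_min_point g I x)"
proof -
  define Ps where "Ps = set_mset (prime_factorization F)"
  have finPs: "finite Ps" unfolding Ps_def by simp
  have primeP: "prime P" if "P \<in> Ps" for P using that unfolding Ps_def by (simp add: in_prime_factors_imp_prime)
  have cover: "\<exists>P\<in>Ps. ev P x (g x) = 0" if x: "x \<in> I" for x
  proof -
    define M where "M = prod_mset (prime_factorization F)"
    have nM: "normalize M = normalize F" unfolding M_def using prod_mset_prime_factorization_weak[OF Fnz] .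
    have "ev F x (g x) = ev (unit_factor F) x (g x) * ev (normalize F) x (g x)"
      using unit_factor_mult_normalize[of F] ev_mult by metis
    then have "ev (normalize F) x (g x) = 0" using zero_graph[OF x] ev_unit[of "unit_factor F"] Fnz by simp
    moreover have "ev M x (g x) = ev (unit_factor M) x (g x) * ev (normalize M) x (g x)"
      using unit_factor_mult_normalize[of M] ev_mult by metis
    ultimately have "ev (prod_mset (prime_factorization F)) x (g x) = 0" using nM unfolding M_def by simp
    then show ?thesis using ev_prod_mset_zero unfolding Ps_def by blast
  qed
  define Z where "Z = (\<lambda>P Q. {x. ev P x (g x) = 0 \<and> ev Q x (g x) = 0})"
  define Qs where "Qs = (\<lambda>P. {Q \<in> (Ps - {P}) \<union> {Py P, Px P, NN P}. \<not> P dvd Q})"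
  define Bad where "Bad = (\<Union>P\<in>{P\<in>Ps. degree P = 0}. {x. ev P x (g x) = 0})
      \<union> (\<Union>P\<in>{P\<in>Ps. degree P \<noteq> 0}. \<Union>Q\<in>Qs P. Z P Q)"
  have "finite Bad"
    unfolding Bad_def
  proof (intro finite_UnI finite_UN_I)
    show "finite {P \<in> Ps. degree P = 0}" "finite {P \<in> Ps. degree P \<noteq> 0}" using finPs by simp_all
    show "finite (Qs P)" for P unfolding Qs_def using finPs by simp
    fix P assume "P \<in> {P \<in> Ps. degree P = 0}"
    then have "P \<noteq> 0" "degree P = 0" using primeP[of P] by (auto simp: prime_def)
    then show "finite {x. ev P x (g x) = 0}" by (rule finite_Z0)
  next
    fix P Q assume "P \<in> {P \<in> Ps. degree P \<noteq> 0}" "Q \<in> Qs P"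
    then show "finite (Z P Q)" unfolding Z_def Qs_def using finite_Z primeP by blast
  qed
  moreover have "\<not> inflection_point g I x \<and> \<not> local_min_point g I x" if x: "x \<in> I" "x \<notin> Bad" for x
  proof -
    obtain P where P: "P \<in> Ps" "ev P x (g x) = 0" using cover[OF x(1)] by blast
    have degP: "degree P \<noteq> 0"
    proof
      assume "degree P = 0"
      then have "x \<in> (\<Union>P\<in>{P\<in>Ps. degree P = 0}. {x. ev P x (g x) = 0})" using P by blast
      then have "x \<in> Bad" unfolding Bad_def by (rule UnI1)
      then show False using x(2) by simp
    qed
    have notBad: "ev Q x (g x) \<noteq> 0" if "Q \<in> Qs P" for Q
    proof
      assume "ev Q x (g x) = 0"
      then have "x \<in> Z P Q" unfolding Z_def using P by simp
      then have "x \<in> (\<Union>P\<in>{P\<in>Ps. degree P \<noteq> 0}. \<Union>Q\<in>Qs P. Z P Q)" using P(1) degP that by blast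
      then have "x \<in> Bad" unfolding Bad_def by (rule UnI2)
      then show False using x(2) by simp
    qed
    have others: "ev Q x (g x) \<noteq> 0" if "Q \<in> Ps - {P}" for Q
    proof (rule notBad)
      have "\<not> P dvd Q" using primes_dvd_imp_eq[of P Q] primeP that P(1) by blast
      then show "Q \<in> Qs P" unfolding Qs_def using that by blast
    qed
    have "\<not> P dvd Py P"
    proof
      assume "P dvd Py P"
      moreover have "Py P \<noteq> 0" using degP by (simp add: Py_def pderiv_eq_0_iff)
      ultimately have "degree P \<le> degree (Py P)" by (rule dvd_imp_degree_le)
      then show False using degP by (simp add: Py_def degree_pderiv)
    qed
    then have Pyx: "ev (Py P) x (g x) \<noteq> 0" using notBad unfolding Qs_def by blast
    define A where "A = (Ps - {P}) \<union> {Py P}"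
    have "\<forall>Q\<in>A. eventually (\<lambda>t. ev Q t (g t) \<noteq> 0) (nhds x)"
      using isCont_eventually_ne[OF evcont[OF x(1)]] others Pyx unfolding A_def by blast
    then have "eventually (\<lambda>t. \<forall>Q\<in>A. ev Q t (g t) \<noteq> 0) (nhds x)"
      by (intro eventually_ball_finite) (simp_all add: A_def finPs)
    moreover have "eventually (\<lambda>t. t \<in> I) (nhds x)" using eventually_nhds_in_open[OF I(1) x(1)] .
    ultimately have "eventually (\<lambda>t. t \<in> I \<and> (\<forall>Q\<in>A. ev Q t (g t) \<noteq> 0)) (nhds x)"
      by (simp add: eventually_conj)
    then obtain e where e: "e > 0" "\<forall>t. dist t x < e \<longrightarrow> t \<in> I \<and> (\<forall>Q\<in>A. ev Q t (g t) \<noteq> 0)"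
      unfolding eventually_nhds_metric by blast
    define B where "B = ball x e"
    have BI: "B \<subseteq> I" using e unfolding B_def by (auto simp: dist_commute)
    have oB: "open B" unfolding B_def by simp
    have xB: "x \<in> B" unfolding B_def using e by simp
    have van: "\<forall>t\<in>B. ev P t (g t) = 0 \<and> ev (Py P) t (g t) \<noteq> 0"
    proof
      fix t assume t: "t \<in> B"
      then have tI: "t \<in> I" and nz: "\<forall>Q\<in>A. ev Q t (g t) \<noteq> 0"
        using e unfolding B_def by (auto simp: dist_commute)
      obtain P' where P': "P' \<in> Ps" "ev P' t (g t) = 0" using cover[OF tI] by blast
      then have "P' = P" using nz unfolding A_def by blast
      then show "ev P t (g t) = 0 \<and> ev (Py P) t (g t) \<noteq> 0" using P' nz unfolding A_def by auto
    qed
    have const_aff: False if "\<forall>t\<in>B. deriv g t = m" for m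
    proof -
      have dz: "\<forall>t\<in>B. ((\<lambda>s. g s - m * s) has_field_derivative 0) (at t within B)"
      proof
        fix t assume t: "t \<in> B"
        have "((\<lambda>s. g s - m * s) has_field_derivative deriv g t - m * 1) (at t)"
          using BI t by (intro DERIV_diff gder DERIV_cmult DERIV_ident) blast
        then show "((\<lambda>s. g s - m * s) has_field_derivative 0) (at t within B)"
          using that t by (simp add: has_field_derivative_at_within)
      qed
      have "\<exists>c. \<forall>t\<in>B. g t - m * t = c"
        by (rule has_field_derivative_zero_constant) (use dz in \<open>auto simp: B_def\<close>)
      then obtain c where c: "\<forall>t\<in>B. g t - m * t = c" by blast
      show False
        by (rule no_affine[OF e(1) BI[unfolded B_def], of m c]) (use c in \<open>auto simp: B_def\<close>)
    qed
    have not_min: "\<not> local_min_point g I x"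
    proof
      assume "local_min_point g I x"
      then obtain d where d: "d > 0" "\<forall>y\<in>I. \<bar>y - x\<bar> < d \<longrightarrow> g x \<le> g y"
        unfolding local_min_point_def by blast
      have "deriv g x = 0"
      proof (rule DERIV_local_min[OF gder[OF x(1)], of "min d e"])
        show "0 < min d e" using d e by simp
        show "\<forall>y. \<bar>x - y\<bar> < min d e \<longrightarrow> g x \<le> g y"
        proof (intro allI impI)
          fix y assume "\<bar>x - y\<bar> < min d e"
          then have "y \<in> B" "\<bar>y - x\<bar> < d" unfolding B_def by (auto simp: dist_real_def)
          then show "g x \<le> g y" using d BI by blast
        qed
      qed
      then have Pxx: "ev (Px P) x (g x) = 0"
        using ball_formula[OF oB BI van xB] Pyx by simp
      show False
      proof (cases "P dvd Px P")
        case False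
        then have "Px P \<in> Qs P" unfolding Qs_def by blast
        then show False using notBad Pxx by blast
      next
        case True
        then obtain R where R: "Px P = P * R" by (rule dvdE)
        have "\<forall>t\<in>B. deriv g t = 0"
          using ball_formula[OF oB BI van] van R by simp
        then show False using const_aff by blast
      qed
    qed
    have not_infl: "\<not> inflection_point g I x"
    proof (cases "ev (NN P) x (g x) = 0")
      case False
      define G2 where "G2 = (\<lambda>t. - ev (NN P) t (g t) / ev (Py P) t (g t) ^ 3)"
      show ?thesis
      proof (rule no_inflection_strict[OF e(1) BI[unfolded B_def]])
        show "\<forall>t\<in>ball x e. (deriv g has_real_derivative G2 t) (at t)"
          unfolding G2_def using ball_deriv2[OF oB BI van] B_def by simp
        show "isCont G2 x" unfolding G2_def using Pyx
          by (intro continuous_intros evcont x(1)) simp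
        show "G2 x \<noteq> 0" unfolding G2_def using False Pyx by simp
      qed
    next
      case True
      show ?thesis
      proof (cases "P dvd NN P")
        case False
        then have "NN P \<in> Qs P" unfolding Qs_def by blast
        then show ?thesis using notBad True by blast
      next
        case dv: True
        then obtain R where R: "NN P = P * R" by (rule dvdE)
        have d0: "\<forall>t\<in>B. (deriv g has_field_derivative 0) (at t within B)"
        proof
          fix t assume t: "t \<in> B"
          have "(deriv g has_real_derivative - ev (NN P) t (g t) / ev (Py P) t (g t) ^ 3) (at t)"
            by (rule ball_deriv2[OF oB BI van t])
          moreover have "ev (NN P) t (g t) = 0" using van t R by simp
          ultimately show "(deriv g has_field_derivative 0) (at t within B)"
            by (simp add: has_field_derivative_at_within)
        qed
        have "\<exists>m. \<forall>t\<in>B. deriv g t = m"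
          by (rule has_field_derivative_zero_constant) (use d0 in \<open>auto simp: B_def\<close>)
        then obtain m where "\<forall>t\<in>B. deriv g t = m" by blast
        then show ?thesis using const_aff by blast
      qed
    qed
    show ?thesis using not_min not_infl by blast
  qed
  ultimately show ?thesis by blast
qed

end

theorem corollary2p2:
  fixes c :: "nat \<Rightarrow> nat \<Rightarrow> real" and n :: nat
    and x0 y0 a b :: real and I J :: "real set" and g :: "real \<Rightarrow> real"
  defines "f \<equiv> bipoly_eval c n"
  assumes fp: "f x0 y0 = 0"
    and fy: "deriv (\<lambda>y. f x0 y) y0 \<noteq> 0"
    and I: "open I" "is_interval I" "x0 \<in> I"
    and J: "open J" "is_interval J" "y0 \<in> J"
    and gmap: "\<forall>x\<in>I. g x \<in> J"
    and gdiff: "g differentiable_on I"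
    and g0: "g x0 = y0"
    and graph: "{(x, y). x \<in> I \<and> y \<in> J \<and> f x y = 0} = {(x, g x) | x. x \<in> I}"
    and ab: "{a..b} \<subseteq> I"
    and nonlin: "\<not> (\<exists>m k. \<forall>x\<in>I. g x = m * x + k)"
  shows "finite {x \<in> {a..b}. inflection_point g I x}
       \<and> finite {x \<in> {a..b}. local_min_point g I x}"
proof -
  define F where "F = bipoly c n"
  have fF: "\<And>x y. f x y = ev F x y" unfolding f_def F_def by (simp add: bipoly_eval_ev)
  have Fnz: "F \<noteq> 0"
  proof
    assume "F = 0"
    then have "(\<lambda>y. f x0 y) = (\<lambda>y. 0)" using fF by simp
    moreover have "deriv (\<lambda>y::real. 0::real) y0 = 0" by (rule DERIV_imp_deriv) (rule DERIV_const)
    ultimately have "deriv (\<lambda>y. f x0 y) y0 = 0" by simp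
    with fy show False by simp
  qed
  have zg: "ev F x (g x) = 0" if x: "x \<in> I" for x
  proof -
    have "(x, g x) \<in> {(x, g x) | x. x \<in> I}" using x by blast
    then have "(x, g x) \<in> {(x, y). x \<in> I \<and> y \<in> J \<and> f x y = 0}" unfolding graph .
    then show ?thesis using fF by simp
  qed
  have gu: "y = g x" if "x \<in> I" "y \<in> J" "ev F x y = 0" for x y
  proof -
    have "(x, y) \<in> {(x, y). x \<in> I \<and> y \<in> J \<and> f x y = 0}" using that fF by simp
    then have "(x, y) \<in> {(x, g x) | x. x \<in> I}" unfolding graph .
    then show ?thesis by blast
  qed
  interpret S: setting F I J g
    by (unfold_locales) (use Fnz I J gmap gdiff zg gu nonlin in auto)
  obtain Bad where Bad: "finite Bad" "\<forall>x\<in>I. x \<notin> Bad \<longrightarrow> \<not> inflection_point g I x \<and> \<not> local_min_point g I x"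
    using S.main_finite by blast
  have "{x \<in> {a..b}. inflection_point g I x} \<subseteq> Bad" using Bad(2) ab by blast
  moreover have "{x \<in> {a..b}. local_min_point g I x} \<subseteq> Bad" using Bad(2) ab by blast
  ultimately show ?thesis using Bad(1) finite_subset by blast
qed

end
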